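(* Assume that the optimizer $x^*$ of the DC-OPF problem satisfies $x^*_n>0$ for all $n\in\{1,\dots,N\}$. Then there exists a unique efficient bid $b^*\in\mathbb R^N_{\ge0}$, given by $b^*_n=\nabla f_n(x^*_n)=2a_nx^*_n+c_n$ for all $n$.
   Context: Network: a directed graph $\mathcal G=(\mathcal V,\mathcal E)$ with buses $\mathcal V=\{1,\dots,N_b\}$ and power lines $\mathcal E$; $\mathcal N_i^+=\{j:(i,j)\in\mathcal E\}$, $\mathcal N_i^-=\{j:(j,i)\in\mathcal E\}$. Each line $(i,j)$ carries flow $z_{ij}\in\mathbb R$ with limit $\bar z_{ij}>0$. There are $N$ generators labelled $1,\dots,N$; $G_i$ is the (possibly empty) set of generators at bus $i$, the $G_i$ partition $\{1,\dots,N\}$. Bus $i$ has load $y_i\ge0$. Generator $n$ has cost $f_n(x)=a_nx^2+c_nx$ with $a_n>0$, $c_n\ge 0$. DC-OPF: minimize $\sum_{n=1}^N f_n(x_n)$ over $(x,z)$ subject to $\sum_{j\in\mathcal N_i^+}z_{ij}-\sum_{j\in\mathcal N_i^-}z_{ji}=\sum_{n\in G_i}x_n-y_i$ for all buses $i$, $-\bar z_{ij}\le z_{ij}\le\bar z_{ij}$ for all $(i,j)\in\mathcal E$, and $x\ge 0$; assumed feasible, with optimizer $(x^*,z^* )$, $x^*$ unique. S-DC-OPF given bids $b\in\mathbb R^N_{\ge0}$: same constraints, objective $\sum_n b_nx_n$. Efficient bid: $b^*\ge0$ such that $(x^*,z^* )$ is an optimizer of S-DC-OPF with bids $b^*$ and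 $x^*_n=\arg\max_{x\ge0}(b^*_nx-f_n(x))$ for all $n$. *)

theory Defs
  imports Complex_Main
begin

text \<open>Buses are the elements of a finite type 'v, generators the elements of a finite
  type 'g. The set of lines is E (pairs (i,j) of buses). loc n is the bus at which
  generator n sits, so G_i = {n. loc n = i}; these sets partition the generators.
  Flows z are functions on pairs of buses (only values on E matter).\<close>

definition gen_cost :: "real \<Rightarrow> real \<Rightarrow> real \<Rightarrow> real" where
  "gen_cost a c x = a * x^2 + c * x"

definition dcopf_feasible ::
  "('v::finite \<times> 'v) set \<Rightarrow> ('v \<times> 'v \<Rightarrow> real) \<Rightarrow> ('g::finite \<Rightarrow> 'v) \<Rightarrow> ('v \<Rightarrow> real)
   \<Rightarrow> ('g \<Rightarrow> real) \<Rightarrow> ('v \<times> 'v \<Rightarrow> real) \<Rightarrow> bool" where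
  "dcopf_feasible E zbar loc y x z \<longleftrightarrow>
     (\<forall>i. (\<Sum>j\<in>{j. (i,j) \<in> E}. z (i,j)) - (\<Sum>j\<in>{j. (j,i) \<in> E}. z (j,i))
           = (\<Sum>n\<in>{n. loc n = i}. x n) - y i) \<and>
     (\<forall>e\<in>E. - zbar e \<le> z e \<and> z e \<le> zbar e) \<and>
     (\<forall>n. 0 \<le> x n)"

definition dcopf_optimal where
  "dcopf_optimal E zbar loc y a c x z \<longleftrightarrow>
     dcopf_feasible E zbar loc y x z \<and>
     (\<forall>x' z'. dcopf_feasible E zbar loc y x' z' \<longrightarrow>
        (\<Sum>n\<in>UNIV. gen_cost (a n) (c n) (x n)) \<le> (\<Sum>n\<in>UNIV. gen_cost (a n) (c n) (x' n)))"

definition sdcopf_optimal where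
  "sdcopf_optimal E zbar loc y b x z \<longleftrightarrow>
     dcopf_feasible E zbar loc y x z \<and>
     (\<forall>x' z'. dcopf_feasible E zbar loc y x' z' \<longrightarrow>
        (\<Sum>n\<in>UNIV. b n * x n) \<le> (\<Sum>n\<in>UNIV. b n * x' n))"

definition efficient_bid where
  "efficient_bid E zbar loc y a c xs zs b \<longleftrightarrow>
     (\<forall>n. 0 \<le> b n) \<and>
     sdcopf_optimal E zbar loc y b xs zs \<and>
     (\<forall>n. is_arg_max (\<lambda>x. b n * x - gen_cost (a n) (c n) x) (\<lambda>x. 0 \<le> x) (xs n))"

end

theory Submission
  imports Defs
begin

lemma feas_comb:
  assumes "dcopf_feasible E zbar loc y x z" "dcopf_feasible E zbar loc y x' z'"
    and t: "0 \<le> t" "t \<le> 1"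
  shows "dcopf_feasible E zbar loc y (\<lambda>n. (1-t) * x n + t * x' n) (\<lambda>e. (1-t) * z e + t * z' e)"
proof -
  have A: "\<forall>i. (\<Sum>j\<in>{j. (i,j) \<in> E}. z (i,j)) - (\<Sum>j\<in>{j. (j,i) \<in> E}. z (j,i))
           = (\<Sum>n\<in>{n. loc n = i}. x n) - y i"
   and B: "\<forall>e\<in>E. - zbar e \<le> z e \<and> z e \<le> zbar e" and C: "\<forall>n. 0 \<le> x n"
    using assms(1) unfolding dcopf_feasible_def by auto
  have A': "\<forall>i. (\<Sum>j\<in>{j. (i,j) \<in> E}. z' (i,j)) - (\<Sum>j\<in>{j. (j,i) \<in> E}. z' (j,i))
           = (\<Sum>n\<in>{n. loc n = i}. x' n) - y i"
   and B': "\<forall>e\<in>E. - zbar e \<le> z' e \<and> z' e \<le> zbar e" and C': "\<forall>n. 0 \<le> x' n"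
    using assms(2) unfolding dcopf_feasible_def by auto
  show ?thesis
    unfolding dcopf_feasible_def
  proof (intro conjI allI ballI)
    fix i
    have e1: "(\<Sum>j\<in>{j. (i,j) \<in> E}. (1-t) * z (i,j) + t * z' (i,j)) - (\<Sum>j\<in>{j. (j,i) \<in> E}. (1-t) * z (j,i) + t * z' (j,i))
      = (1-t) * ((\<Sum>j\<in>{j. (i,j) \<in> E}. z (i,j)) - (\<Sum>j\<in>{j. (j,i) \<in> E}. z (j,i)))
        + t * ((\<Sum>j\<in>{j. (i,j) \<in> E}. z' (i,j)) - (\<Sum>j\<in>{j. (j,i) \<in> E}. z' (j,i)))"
      by (simp add: sum.distrib sum_distrib_left right_diff_distrib)
    have e2: "(\<Sum>n\<in>{n. loc n = i}. (1-t) * x n + t * x' n) - y i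
      = (1-t) * ((\<Sum>n\<in>{n. loc n = i}. x n) - y i) + t * ((\<Sum>n\<in>{n. loc n = i}. x' n) - y i)"
    proof -
      have "(\<Sum>n\<in>{n. loc n = i}. (1-t) * x n + t * x' n) = (1-t) * (\<Sum>n\<in>{n. loc n = i}. x n) + t * (\<Sum>n\<in>{n. loc n = i}. x' n)"
        by (simp only: sum.distrib sum_distrib_left)
      thus ?thesis by (simp add: algebra_simps)
    qed
    show "(\<Sum>j\<in>{j. (i,j) \<in> E}. (1-t) * z (i,j) + t * z' (i,j)) - (\<Sum>j\<in>{j. (j,i) \<in> E}. (1-t) * z (j,i) + t * z' (j,i))
      = (\<Sum>n\<in>{n. loc n = i}. (1-t) * x n + t * x' n) - y i"
      using e1 e2 A A' by simp
  next
    fix e assume "e \<in> E"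
    then have "- zbar e \<le> z e" "z e \<le> zbar e" "- zbar e \<le> z' e" "z' e \<le> zbar e" using B B' by auto
    moreover have "0 \<le> 1 - t" using t by simp
    ultimately have "(1-t) * (- zbar e) \<le> (1-t) * z e" "(1-t) * z e \<le> (1-t) * zbar e"
      "t * (- zbar e) \<le> t * z' e" "t * z' e \<le> t * zbar e"
      using t by (metis mult_left_mono mult_minus_right)+
    then show "- zbar e \<le> (1-t) * z e + t * z' e" "(1-t) * z e + t * z' e \<le> zbar e"
      by (auto simp: algebra_simps)
  next
    fix n show "0 \<le> (1-t) * x n + t * x' n" using C C' t by simp
  qed
qed

lemma argmax_unique:
  fixes a b c xs :: real
  assumes a: "a > 0" and xp: "xs > 0"
    and am: "is_arg_max (\<lambda>x. b * x - gen_cost a c x) (\<lambda>x. 0 \<le> x) xs"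
  shows "b = 2 * a * xs + c"
proof -
  have ge: "\<And>x. 0 \<le> x \<Longrightarrow> b * x - gen_cost a c x \<le> b * xs - gen_cost a c xs"
    using am unfolding is_arg_max_linorder by auto
  define d where "d = b - c - 2 * a * xs"
  have key: "\<And>t. 0 \<le> xs + t \<Longrightarrow> t * d - a * t^2 \<le> 0"
  proof -
    fix t assume "0 \<le> xs + t"
    from ge[OF this] show "t * d - a * t^2 \<le> 0"
      unfolding gen_cost_def d_def by (simp add: power2_eq_square algebra_simps)
  qed
  have "d = 0"
  proof (rule ccontr)
    assume "d \<noteq> 0"
    then consider "d > 0" | "d < 0" by linarith
    then show False
    proof cases
      case 1
      define t where "t = d / (2*a)"
      have "t > 0" using 1 a by (simp add: t_def)
      have "a * t = d / 2" using a by (simp add: t_def)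
      hence "t * d - a * t^2 = t * (d / 2)" by (simp add: power2_eq_square algebra_simps)
      moreover have "t * (d/2) > 0" using `t>0` 1 by simp
      moreover have "0 \<le> xs + t" using `t>0` xp by simp
      ultimately show False using key[of t] by linarith
    next
      case 2
      define t where "t = max (d / (2*a)) (- xs)"
      have "d / (2*a) < 0" using 2 a by (simp add: divide_neg_pos)
      hence "t < 0" using xp by (simp add: t_def)
      have "a * t \<ge> d / 2" using a by (simp add: t_def max_def field_simps split: if_splits)
      hence "d - a * t < 0" using 2 by linarith
      hence "t * (d - a * t) > 0" using `t<0` by (simp add: mult_neg_neg)
      moreover have "t * d - a * t^2 = t * (d - a*t)" by (simp add: power2_eq_square algebra_simps)
      moreover have "0 \<le> xs + t" by (simp add: t_def)
      ultimately show False using key[of t] by linarith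
    qed
  qed
  thus ?thesis unfolding d_def by simp
qed

theorem lemma3p2:
  fixes E :: "('v::finite \<times> 'v) set"
    and zbar :: "'v \<times> 'v \<Rightarrow> real"
    and loc :: "'g::finite \<Rightarrow> 'v"
    and y :: "'v \<Rightarrow> real"
    and a c :: "'g \<Rightarrow> real"
    and xs :: "'g \<Rightarrow> real"
    and zs :: "'v \<times> 'v \<Rightarrow> real"
  assumes zbar_pos: "\<forall>e\<in>E. 0 < zbar e"
    and y_nonneg: "\<forall>i. 0 \<le> y i"
    and a_pos: "\<forall>n. 0 < a n"
    and c_nonneg: "\<forall>n. 0 \<le> c n"
    and opt: "dcopf_optimal E zbar loc y a c xs zs"
    and xs_unique: "\<forall>x' z'. dcopf_optimal E zbar loc y a c x' z' \<longrightarrow> x' = xs"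
    and xs_pos: "\<forall>n. 0 < xs n"
  shows "(\<exists>!b. efficient_bid E zbar loc y a c xs zs b)
    \<and> efficient_bid E zbar loc y a c xs zs (\<lambda>n. 2 * a n * xs n + c n)"
proof -
  define b where "b = (\<lambda>n. 2 * a n * xs n + c n)"
  have feas: "dcopf_feasible E zbar loc y xs zs" using opt unfolding dcopf_optimal_def by simp
  have best: "\<And>x' z'. dcopf_feasible E zbar loc y x' z' \<Longrightarrow>
        (\<Sum>n\<in>UNIV. gen_cost (a n) (c n) (xs n)) \<le> (\<Sum>n\<in>UNIV. gen_cost (a n) (c n) (x' n))"
    using opt unfolding dcopf_optimal_def by blast
  have sopt: "sdcopf_optimal E zbar loc y b xs zs"
    unfolding sdcopf_optimal_def
  proof (intro conjI allI impI)
    show "dcopf_feasible E zbar loc y xs zs" by fact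
    fix x' z' assume f': "dcopf_feasible E zbar loc y x' z'"
    define D where "D = (\<Sum>n\<in>UNIV. b n * (x' n - xs n))"
    define Q where "Q = (\<Sum>n\<in>UNIV. a n * (x' n - xs n)^2)"
    have Q0: "Q \<ge> 0" unfolding Q_def using a_pos by (intro sum_nonneg) (simp add: less_imp_le)
    have tD: "\<And>t. 0 < t \<Longrightarrow> t \<le> 1 \<Longrightarrow> 0 \<le> t * D + t^2 * Q"
    proof -
      fix t :: real assume t: "0 < t" "t \<le> 1"
      have ft: "dcopf_feasible E zbar loc y (\<lambda>n. (1-t) * xs n + t * x' n) (\<lambda>e. (1-t) * zs e + t * zs' e)"
        if "zs' = z'" for zs' using feas_comb[OF feas f'] t that by simp
      have pw: "\<And>n. gen_cost (a n) (c n) ((1-t) * xs n + t * x' n) - gen_cost (a n) (c n) (xs n)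
          = t * (b n * (x' n - xs n)) + t^2 * (a n * (x' n - xs n)^2)"
        unfolding gen_cost_def b_def by (simp add: power2_eq_square algebra_simps)
      have "(\<Sum>n\<in>UNIV. gen_cost (a n) (c n) ((1-t) * xs n + t * x' n)) - (\<Sum>n\<in>UNIV. gen_cost (a n) (c n) (xs n))
          = (\<Sum>n\<in>UNIV. t * (b n * (x' n - xs n)) + t^2 * (a n * (x' n - xs n)^2))"
        by (simp add: sum_subtractf[symmetric] pw)
      also have "\<dots> = t * D + t^2 * Q"
        by (simp add: D_def Q_def sum.distrib sum_distrib_left)
      finally show "0 \<le> t * D + t^2 * Q" using best[OF ft[OF refl]] by linarith
    qed
    have "D \<ge> 0"
    proof (rule ccontr)
      assume "\<not> D \<ge> 0" hence Dn: "D < 0" by simp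
      define t where "t = min 1 (- D / (2*Q + 1))"
      have "2*Q+1 > 0" using Q0 by simp
      hence "- D / (2*Q + 1) > 0" using Dn by (intro divide_pos_pos) auto
      hence tp: "0 < t" "t \<le> 1" by (auto simp: t_def)
      have "t * Q \<le> (- D / (2*Q+1)) * Q" using Q0 by (intro mult_right_mono) (auto simp: t_def)
      also have "\<dots> \<le> - D / 2" using Q0 Dn by (simp add: field_simps)
      finally have "D + t * Q < 0" using Dn by linarith
      hence "t * (D + t*Q) < 0" using tp by (simp add: mult_pos_neg)
      moreover have "t * (D + t*Q) = t * D + t^2 * Q" by (simp add: power2_eq_square algebra_simps)
      ultimately show False using tD[OF tp] by linarith
    qed
    thus "(\<Sum>n\<in>UNIV. b n * xs n) \<le> (\<Sum>n\<in>UNIV. b n * x' n)"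
      unfolding D_def by (simp add: right_diff_distrib sum_subtractf)
  qed
  have eff: "efficient_bid E zbar loc y a c xs zs b"
    unfolding efficient_bid_def
  proof (intro conjI allI sopt)
    fix n
    show "0 \<le> b n" using a_pos c_nonneg xs_pos unfolding b_def
      by (metis add_nonneg_nonneg less_eq_real_def mult_nonneg_nonneg zero_le_numeral)
    show "is_arg_max (\<lambda>x. b n * x - gen_cost (a n) (c n) x) (\<lambda>x. 0 \<le> x) (xs n)"
      unfolding is_arg_max_linorder
    proof (intro conjI allI impI)
      show "0 \<le> xs n" using xs_pos less_imp_le by blast
      fix x :: real assume "0 \<le> x"
      have "0 \<le> a n * (xs n - x)^2" using a_pos by (simp add: less_imp_le)
      thus "b n * x - gen_cost (a n) (c n) x \<le> b n * xs n - gen_cost (a n) (c n) (xs n)"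
        unfolding b_def gen_cost_def by (simp add: power2_eq_square algebra_simps)
    qed
  qed
  have uniq: "\<And>b'. efficient_bid E zbar loc y a c xs zs b' \<Longrightarrow> b' = b"
  proof
    fix b' n assume "efficient_bid E zbar loc y a c xs zs b'"
    hence "is_arg_max (\<lambda>x. b' n * x - gen_cost (a n) (c n) x) (\<lambda>x. 0 \<le> x) (xs n)"
      unfolding efficient_bid_def by blast
    from argmax_unique[OF _ _ this] a_pos xs_pos show "b' n = b n" unfolding b_def by simp
  qed
  show ?thesis using eff uniq unfolding b_def[symmetric] by blast
qed

end
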